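(* Let $\mathcal{A}$ be a $\sigma$-algebra on a set $X$ and let $\mathcal{F},\mathcal{G}$ be $\sigma$-algebras on a set $U$. The following are equivalent: (i) $(\mathcal{A}\otimes\mathcal{F})\cap(\mathcal{A}\otimes\mathcal{G})=\mathcal{A}\otimes(\mathcal{F}\cap\mathcal{G})$; (ii) there exist a $\sigma$-algebra $\mathcal{A}_0$ on $X$ and a $\sigma$-algebra $\mathcal{E}$ on $U$ such that $(\mathcal{A}\otimes\mathcal{F})\cap(\mathcal{A}\otimes\mathcal{G})=\mathcal{A}_0\otimes\mathcal{E}$.
   Context: For $\sigma$-algebras $\mathcal{A}$ on $X$ and $\mathcal{F}$ on $U$, $\mathcal{A}\otimes\mathcal{F}$ denotes the product $\sigma$-algebra on $X\times U$, i.e. the smallest $\sigma$-algebra containing all rectangles $A\times F$ with $A\in\mathcal{A}$, $F\in\mathcal{F}$. *)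

theory Defs
  imports "HOL-Analysis.Analysis"
begin

definition prod_sigma :: "'a set \<Rightarrow> 'b set \<Rightarrow> 'a set set \<Rightarrow> 'b set set \<Rightarrow> ('a \<times> 'b) set set" where
  "prod_sigma X U A F = sigma_sets (X \<times> U) {a \<times> f | a f. a \<in> A \<and> f \<in> F}"

end

theory Submission
  imports Defs
begin

lemma sa_pow: "sigma_algebra X A \<Longrightarrow> A \<subseteq> Pow X"
  by (simp add: sigma_algebra_iff2)

lemma sa_inter: "sigma_algebra U F \<Longrightarrow> sigma_algebra U G \<Longrightarrow> sigma_algebra U (F \<inter> G)"
  unfolding sigma_algebra_iff2 by (auto simp: subset_eq)

lemma prod_sigma_sets:
  assumes "sigma_algebra X A" "sigma_algebra U F"
  shows "prod_sigma X U A F = sets (measure_of X A (\<lambda>_. 0) \<Otimes>\<^sub>M measure_of U F (\<lambda>_. 0))"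
proof -
  have s1: "sets (measure_of X A (\<lambda>_. 0)) = A" "space (measure_of X A (\<lambda>_. 0)) = X"
    using assms(1) by (auto simp: sigma_algebra.sigma_sets_eq sa_pow)
  have s2: "sets (measure_of U F (\<lambda>_. 0)) = F" "space (measure_of U F (\<lambda>_. 0)) = U"
    using assms(2) by (auto simp: sigma_algebra.sigma_sets_eq sa_pow)
  show ?thesis unfolding prod_sigma_def sets_pair_measure s1 s2 by simp
qed

lemma sec2:
  assumes "sigma_algebra X A" "sigma_algebra U F" "S \<in> prod_sigma X U A F" "u \<in> U"
  shows "{x. (x, u) \<in> S} \<in> A"
proof -
  let ?M1 = "measure_of X A (\<lambda>_. 0)" and ?M2 = "measure_of U F (\<lambda>_. 0)"
  have s1: "sets ?M1 = A" "space ?M1 = X"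
    using assms(1) by (auto simp: sigma_algebra.sigma_sets_eq sa_pow)
  have s2: "space ?M2 = U"
    using assms(2) by (auto simp: sa_pow)
  have "(\<lambda>x. (x, u)) -` S \<inter> space ?M1 \<in> sets ?M1"
    using measurable_Pair2'[of u ?M2 ?M1] assms prod_sigma_sets[OF assms(1,2)] s2
    by (auto simp: measurable_def)
  moreover have "S \<subseteq> X \<times> U" using assms prod_sigma_sets[OF assms(1,2)] s1 s2
    by (metis sets.sets_into_space space_pair_measure)
  moreover have "(\<lambda>x. (x, u)) -` S \<inter> X = {x. (x, u) \<in> S}" using calculation(2) by auto
  ultimately show ?thesis using s1 by simp
qed

lemma sec1:
  assumes "sigma_algebra X A" "sigma_algebra U F" "S \<in> prod_sigma X U A F" "x \<in> X"
  shows "{u. (x, u) \<in> S} \<in> F"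
proof -
  let ?M1 = "measure_of X A (\<lambda>_. 0)" and ?M2 = "measure_of U F (\<lambda>_. 0)"
  have s1: "space ?M1 = X"
    using assms(1) by (auto simp: sa_pow)
  have s2: "sets ?M2 = F" "space ?M2 = U"
    using assms(2) by (auto simp: sigma_algebra.sigma_sets_eq sa_pow)
  have "(\<lambda>u. (x, u)) -` S \<inter> space ?M2 \<in> sets ?M2"
    using measurable_Pair1'[of x ?M1 ?M2] assms prod_sigma_sets[OF assms(1,2)] s1
    by (auto simp: measurable_def)
  moreover have "S \<subseteq> X \<times> U" using assms prod_sigma_sets[OF assms(1,2)] s1 s2
    by (metis sets.sets_into_space space_pair_measure)
  moreover have "(\<lambda>u. (x, u)) -` S \<inter> U = {u. (x, u) \<in> S}" using calculation(2) by auto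
  ultimately show ?thesis using s2 by simp
qed

theorem lemma2p4:
  fixes X :: "'a set" and U :: "'b set"
    and A :: "'a set set" and F G :: "'b set set"
  assumes "sigma_algebra X A" and "sigma_algebra U F" and "sigma_algebra U G"
  shows "prod_sigma X U A F \<inter> prod_sigma X U A G = prod_sigma X U A (F \<inter> G)
     \<longleftrightarrow> (\<exists>A0 E. sigma_algebra X A0 \<and> sigma_algebra U E \<and>
           prod_sigma X U A F \<inter> prod_sigma X U A G = prod_sigma X U A0 E)"
proof
  have FG: "sigma_algebra U (F \<inter> G)"
    using assms(2,3) by (rule sa_inter)
  show "prod_sigma X U A F \<inter> prod_sigma X U A G = prod_sigma X U A (F \<inter> G) \<Longrightarrow> \<exists>A0 E. sigma_algebra X A0 \<and> sigma_algebra U E \<and>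
           prod_sigma X U A F \<inter> prod_sigma X U A G = prod_sigma X U A0 E"
    using assms(1) FG by blast
  assume "\<exists>A0 E. sigma_algebra X A0 \<and> sigma_algebra U E \<and>
           prod_sigma X U A F \<inter> prod_sigma X U A G = prod_sigma X U A0 E"
  then obtain A0 E where A0: "sigma_algebra X A0" and E: "sigma_algebra U E"
    and I: "prod_sigma X U A F \<inter> prod_sigma X U A G = prod_sigma X U A0 E" by blast
  have saFG: "sigma_algebra (X \<times> U) (prod_sigma X U A (F \<inter> G))"
    unfolding prod_sigma_def
    apply (rule sigma_algebra_sigma_sets)
    using assms(1) FG by (auto dest: sa_pow)
  have sub1: "prod_sigma X U A (F \<inter> G) \<subseteq> prod_sigma X U A F \<inter> prod_sigma X U A G"
    unfolding prod_sigma_def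
  proof (intro Int_greatest)
    show "sigma_sets (X \<times> U) {a \<times> f |a f. a \<in> A \<and> f \<in> F \<inter> G} \<subseteq> sigma_sets (X \<times> U) {a \<times> f |a f. a \<in> A \<and> f \<in> F}"
      by (rule sigma_sets_mono') blast
    show "sigma_sets (X \<times> U) {a \<times> f |a f. a \<in> A \<and> f \<in> F \<inter> G} \<subseteq> sigma_sets (X \<times> U) {a \<times> f |a f. a \<in> A \<and> f \<in> G}"
      by (rule sigma_sets_mono') blast
  qed
  have sub2: "prod_sigma X U A0 E \<subseteq> prod_sigma X U A (F \<inter> G)"
    unfolding prod_sigma_def[of X U A0 E]
  proof (rule sigma_algebra.sigma_sets_subset[OF saFG], safe)
    fix a e assume a: "a \<in> A0" and e: "e \<in> E"
    have r: "a \<times> e \<in> prod_sigma X U A0 E"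
      unfolding prod_sigma_def using a e by (auto intro: sigma_sets.Basic)
    show "a \<times> e \<in> prod_sigma X U A (F \<inter> G)"
    proof (cases "a = {} \<or> e = {}")
      case True
      then show ?thesis using saFG by (auto simp: sigma_algebra_iff2)
    next
      case False
      then obtain x u where x: "x \<in> a" and u: "u \<in> e" by auto
      have xX: "x \<in> X" using x a A0 by (auto dest: sa_pow)
      have uU: "u \<in> U" using u e E by (auto dest: sa_pow)
      have inF: "a \<times> e \<in> prod_sigma X U A F" and inG: "a \<times> e \<in> prod_sigma X U A G"
        using r I by auto
      have "{x'. (x', u) \<in> a \<times> e} \<in> A" by (rule sec2[OF assms(1,2) inF uU])
      moreover have "{x'. (x', u) \<in> a \<times> e} = a" using u by auto
      moreover have "{u'. (x, u') \<in> a \<times> e} \<in> F" by (rule sec1[OF assms(1,2) inF xX])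
      moreover have "{u'. (x, u') \<in> a \<times> e} \<in> G" by (rule sec1[OF assms(1,3) inG xX])
      moreover have "{u'. (x, u') \<in> a \<times> e} = e" using x by auto
      ultimately show ?thesis unfolding prod_sigma_def
        by (auto intro!: sigma_sets.Basic)
    qed
  qed
  show "prod_sigma X U A F \<inter> prod_sigma X U A G = prod_sigma X U A (F \<inter> G)"
    using sub1 sub2 I by auto
qed

end
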